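(* Let $G$ be a weakly-reversible chemical reaction network in $s$ species and $\mathbf{k}$ a field of characteristic zero. If $G$ is atomic, then the ideal $(\mathcal{E}_G)\subseteq\mathbf{k}[x_1,\dots,x_s]$ is prime.
   Context: A chemical reaction network (CRN) consists of positive integers $s,n$, a finite directed graph $G$ with vertex set $\{1,\dots,n\}$ and edge set $E(G)$, and an injective labeling of vertex $i$ by a monic monomial $\psi_i=\prod_{j=1}^s x_j^{y_{ij}}$. $G$ is weakly-reversible iff each connected component is strongly connected. The associated event-system $\mathcal{E}_G$ is the set of binomials $\psi_i-\psi_j$, one for each pair $\{i,j\}$ with $(i,j)\in E(G)$ or $(j,i)\in E(G)$, and $(\mathcal{E}_G)$ is the ideal it generates. The event-graph $\overline{G}$ has as vertices all monic monomials in $x_1,\dots,x_s$ (including $1$), with an edge $(N\psi_i,N\psi_j)$ for each $(i,j)\in E(G)$ and each monic monomial $N$. The atoms of $G$ are the variables $x_i$ that are isolated vertices of $\overline{G}$. An atomic monomial is a monic monomial all of whose variables are atoms. $G$ is atomic iff every connected component of $\overline{G}$ contains exactly one atomic monomial. *)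

theory Defs
  imports Main "HOL-Library.Poly_Mapping"
begin

text \<open>Monomials in variables x_0,...,x_(s-1) are exponent vectors  nat =>0 nat  with
 Poly_Mapping.keys among {..<s}; multiplication of monomials is addition of exponent vectors.
 Polynomials over k are  (nat =>0 nat) =>0 k (the convolution ring structure of Poly_Mapping).\<close>

type_synonym monom = "nat \<Rightarrow>\<^sub>0 nat"
type_synonym 'k mpoly = "monom \<Rightarrow>\<^sub>0 'k"

definition monomials :: "nat \<Rightarrow> monom set" where
  "monomials s = {m. Poly_Mapping.keys m \<subseteq> {..<s}}"

definition polys :: "nat \<Rightarrow> ('k::comm_ring_1) mpoly set" where
  "polys s = {p. \<forall>m\<in>Poly_Mapping.keys p. Poly_Mapping.keys m \<subseteq> {..<s}}"

definition mono_poly :: "monom \<Rightarrow> ('k::comm_ring_1) mpoly" where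
  "mono_poly m = Poly_Mapping.single m 1"

definition var :: "nat \<Rightarrow> monom" where
  "var i = Poly_Mapping.single i 1"

definition is_ideal_in :: "'a::comm_ring_1 set \<Rightarrow> 'a set \<Rightarrow> bool" where
  "is_ideal_in R I \<longleftrightarrow> I \<subseteq> R \<and> 0 \<in> I \<and> (\<forall>a\<in>I. \<forall>b\<in>I. a + b \<in> I)
      \<and> (\<forall>r\<in>R. \<forall>a\<in>I. r * a \<in> I)"

definition ideal_gen_in :: "'a::comm_ring_1 set \<Rightarrow> 'a set \<Rightarrow> 'a set" where
  "ideal_gen_in R S = \<Inter>{I. is_ideal_in R I \<and> S \<subseteq> I}"

definition prime_ideal_in :: "'a::comm_ring_1 set \<Rightarrow> 'a set \<Rightarrow> bool" where
  "prime_ideal_in R I \<longleftrightarrow> is_ideal_in R I \<and> I \<noteq> R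
      \<and> (\<forall>a\<in>R. \<forall>b\<in>R. a * b \<in> I \<longrightarrow> a \<in> I \<or> b \<in> I)"

text \<open>A CRN: s species, vertices {0..<n}, edge set E, labels psi (monic monomials).\<close>
definition is_crn :: "nat \<Rightarrow> nat \<Rightarrow> (nat \<times> nat) set \<Rightarrow> (nat \<Rightarrow> monom) \<Rightarrow> bool" where
  "is_crn s n E psi \<longleftrightarrow> 0 < s \<and> 0 < n \<and> E \<subseteq> {..<n} \<times> {..<n}
      \<and> (\<forall>i<n. psi i \<in> monomials s) \<and> inj_on psi {..<n}"

definition weakly_reversible :: "nat \<Rightarrow> (nat \<times> nat) set \<Rightarrow> bool" where
  "weakly_reversible n E \<longleftrightarrow>
     (\<forall>i<n. \<forall>j<n. (i, j) \<in> (E \<union> E\<inverse>)\<^sup>* \<longrightarrow> (i, j) \<in> E\<^sup>*)"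

definition event_system :: "(nat \<times> nat) set \<Rightarrow> (nat \<Rightarrow> monom) \<Rightarrow> ('k::comm_ring_1) mpoly set" where
  "event_system E psi = {mono_poly (psi i) - mono_poly (psi j) | i j. (i, j) \<in> E}"

definition event_edges :: "nat \<Rightarrow> (nat \<times> nat) set \<Rightarrow> (nat \<Rightarrow> monom) \<Rightarrow> (monom \<times> monom) set" where
  "event_edges s E psi = {(N + psi i, N + psi j) | N i j. N \<in> monomials s \<and> (i, j) \<in> E}"

definition atoms :: "nat \<Rightarrow> (nat \<times> nat) set \<Rightarrow> (nat \<Rightarrow> monom) \<Rightarrow> nat set" where
  "atoms s E psi = {i. i < s \<and> (\<forall>(a, b)\<in>event_edges s E psi. a \<noteq> var i \<and> b \<noteq> var i)}"

definition atomic_monomial :: "nat \<Rightarrow> (nat \<times> nat) set \<Rightarrow> (nat \<Rightarrow> monom) \<Rightarrow> monom \<Rightarrow> bool" where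
  "atomic_monomial s E psi m \<longleftrightarrow> m \<in> monomials s \<and> Poly_Mapping.keys m \<subseteq> atoms s E psi"

definition is_atomic :: "nat \<Rightarrow> (nat \<times> nat) set \<Rightarrow> (nat \<Rightarrow> monom) \<Rightarrow> bool" where
  "is_atomic s E psi \<longleftrightarrow>
     (\<forall>m\<in>monomials s. \<exists>!a. atomic_monomial s E psi a \<and>
          (m, a) \<in> (event_edges s E psi \<union> (event_edges s E psi)\<inverse>)\<^sup>*)"

end

theory Submission
  imports Defs
begin

definition Phi :: "(monom \<Rightarrow> monom) \<Rightarrow> ('k::comm_ring_1) mpoly \<Rightarrow> 'k mpoly" where
  "Phi r p = (\<Sum>m\<in>Poly_Mapping.keys p. Poly_Mapping.single (r m) (Poly_Mapping.lookup p m))"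

lemma Phi_superset:
  assumes "finite A" "Poly_Mapping.keys p \<subseteq> A"
  shows "Phi r p = (\<Sum>m\<in>A. Poly_Mapping.single (r m) (Poly_Mapping.lookup p m))"
  unfolding Phi_def
  by (rule sum.mono_neutral_left) (use assms in \<open>auto simp: in_keys_iff\<close>)

lemma Phi_zero [simp]: "Phi r 0 = 0"
  by (simp add: Phi_def)

lemma Phi_add: "Phi r (p + q) = Phi r p + Phi r q"
proof -
  let ?A = "Poly_Mapping.keys p \<union> Poly_Mapping.keys q"
  have f: "finite ?A" by simp
  have "Phi r (p + q) = (\<Sum>m\<in>?A. Poly_Mapping.single (r m) (Poly_Mapping.lookup (p+q) m))"
    by (rule Phi_superset[OF f]) (simp add: keys_add)
  also have "\<dots> = (\<Sum>m\<in>?A. Poly_Mapping.single (r m) (Poly_Mapping.lookup p m))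
     + (\<Sum>m\<in>?A. Poly_Mapping.single (r m) (Poly_Mapping.lookup q m))"
    by (simp add: lookup_add single_add sum.distrib)
  also have "\<dots> = Phi r p + Phi r q"
    by (simp add: Phi_superset[OF f, symmetric])
  finally show ?thesis .
qed

lemma Phi_single [simp]: "Phi r (Poly_Mapping.single x c) = Poly_Mapping.single (r x) c"
  by (simp add: Phi_def)

lemma Phi_minus: "Phi r (p - q) = Phi r p - Phi r q"
  by (metis Phi_add diff_add_cancel eq_diff_eq)

lemma expansion:
  fixes p :: "'a \<Rightarrow>\<^sub>0 'b::comm_monoid_add"
  shows   "p = (\<Sum>m\<in>Poly_Mapping.keys p. Poly_Mapping.single m (Poly_Mapping.lookup p m))"
proof (rule poly_mapping_eqI)
  fix k
  have "Poly_Mapping.lookup (\<Sum>m\<in>Poly_Mapping.keys p. Poly_Mapping.single m (Poly_Mapping.lookup p m)) k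
     = (\<Sum>m\<in>Poly_Mapping.keys p. Poly_Mapping.lookup p m when m = k)"
    by (simp add: lookup_sum lookup_single)
  also have "\<dots> = Poly_Mapping.lookup p k"
    by (cases "k \<in> Poly_Mapping.keys p") (auto simp: in_keys_iff when_def)
  finally show "Poly_Mapping.lookup p k = Poly_Mapping.lookup (\<Sum>m\<in>Poly_Mapping.keys p. Poly_Mapping.single m (Poly_Mapping.lookup p m)) k" by simp
qed

lemma pm_induct [consumes 1, case_names zero single add]:
  fixes p :: "'a \<Rightarrow>\<^sub>0 'b::comm_monoid_add"
  assumes "Poly_Mapping.keys p \<subseteq> S"
    and "P 0" and "\<And>x c. x \<in> S \<Longrightarrow> P (Poly_Mapping.single x c)"
    and "\<And>a b. P a \<Longrightarrow> P b \<Longrightarrow> P (a + b)"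
  shows "P p"
proof -
  have "\<And>A. finite A \<Longrightarrow> A \<subseteq> S \<Longrightarrow> P (\<Sum>m\<in>A. Poly_Mapping.single m (Poly_Mapping.lookup p m))"
  proof -
    fix A :: "'a set" assume "finite A" "A \<subseteq> S"
    then show "P (\<Sum>m\<in>A. Poly_Mapping.single m (Poly_Mapping.lookup p m))"
      by (induction A rule: finite_induct) (auto intro: assms)
  qed
  from this[of "Poly_Mapping.keys p"] assms(1) show ?thesis
    using expansion[of p] by simp
qed

lemma Phi_mult:
  assumes hom: "\<And>a b. a \<in> S \<Longrightarrow> b \<in> S \<Longrightarrow> r (a + b) = r a + r b"
    and "Poly_Mapping.keys p \<subseteq> S" "Poly_Mapping.keys q \<subseteq> S"
  shows "Phi r (p * q) = Phi r p * Phi r q"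
  using assms(2)
proof (induction p rule: pm_induct)
  case zero then show ?case by simp
next
  case (single x c)
  from assms(3) show ?case
  proof (induction q rule: pm_induct)
    case zero then show ?case by simp
  next
    case (single y d)
    then show ?case using hom[of x y] \<open>x \<in> S\<close> by (simp add: mult_single)
  next
    case (add a b)
    then show ?case by (simp add: distrib_left Phi_add)
  qed
next
  case (add a b)
  then show ?case by (simp add: distrib_right Phi_add)
qed


abbreviation Cr :: "nat \<Rightarrow> (nat \<times> nat) set \<Rightarrow> (nat \<Rightarrow> monom) \<Rightarrow> (monom \<times> monom) set" where
  "Cr s E psi \<equiv> (event_edges s E psi \<union> (event_edges s E psi)\<inverse>)\<^sup>*"

definition rep :: "nat \<Rightarrow> (nat \<times> nat) set \<Rightarrow> (nat \<Rightarrow> monom) \<Rightarrow> monom \<Rightarrow> monom" where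
  "rep s E psi m = (THE a. atomic_monomial s E psi a \<and> (m, a) \<in> Cr s E psi)"

lemma monomials_add: "a \<in> monomials s \<Longrightarrow> b \<in> monomials s \<Longrightarrow> a + b \<in> monomials s"
  unfolding monomials_def by (metis (no_types) Un_least keys_add mem_Collect_eq order_trans)

lemma monomials_zero [simp]: "0 \<in> monomials s"
  by (simp add: monomials_def)

lemma rep_props:
  assumes "is_atomic s E psi" "m \<in> monomials s"
  shows "atomic_monomial s E psi (rep s E psi m) \<and> (m, rep s E psi m) \<in> Cr s E psi"
proof -
  have "\<exists>!a. atomic_monomial s E psi a \<and> (m,a) \<in> Cr s E psi"
    using bspec[OF assms(1)[unfolded is_atomic_def] assms(2)] .
  then show ?thesis unfolding rep_def by (rule theI')
qed

lemma rep_eq: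
  assumes "is_atomic s E psi" "m \<in> monomials s" "atomic_monomial s E psi a" "(m, a) \<in> Cr s E psi"
  shows "rep s E psi m = a"
proof -
  have "\<exists>!a. atomic_monomial s E psi a \<and> (m,a) \<in> Cr s E psi"
    using bspec[OF assms(1)[unfolded is_atomic_def] assms(2)] .
  then show ?thesis unfolding rep_def by (rule the1_equality) (use assms in blast)
qed

lemma Cr_shift:
  assumes "(a, b) \<in> Cr s E psi" "N \<in> monomials s"
  shows "(N + a, N + b) \<in> Cr s E psi"
  using assms(1)
proof (induction rule: rtrancl_induct)
  case base then show ?case by simp
next
  case (step y z)
  have "(N + y, N + z) \<in> event_edges s E psi \<union> (event_edges s E psi)\<inverse>"
  proof -
    have sh: "(N + u, N + v) \<in> event_edges s E psi" if "(u, v) \<in> event_edges s E psi" for u v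
    proof -
      from that obtain M i j where "u = M + psi i" "v = M + psi j" "M \<in> monomials s" "(i, j) \<in> E"
        unfolding event_edges_def by blast
      then have eq: "(N + u, N + v) = ((N + M) + psi i, (N + M) + psi j)"
        by (simp add: add.assoc)
      have NM: "N + M \<in> monomials s" using monomials_add[OF assms(2) \<open>M \<in> monomials s\<close>] .
      show ?thesis unfolding event_edges_def using eq NM \<open>(i, j) \<in> E\<close> by blast
    qed
    from step(2) show ?thesis using sh by blast
  qed
  with step(3) show ?case by (rule rtrancl_into_rtrancl)
qed

lemma atomic_add:
  "atomic_monomial s E psi a \<Longrightarrow> atomic_monomial s E psi b \<Longrightarrow> atomic_monomial s E psi (a + b)"
  unfolding atomic_monomial_def by (metis (no_types) Un_least keys_add monomials_add order_trans)

lemma rep_add: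
  assumes at: "is_atomic s E psi" and "a \<in> monomials s" "b \<in> monomials s"
  shows "rep s E psi (a + b) = rep s E psi a + rep s E psi b"
proof (rule rep_eq[OF at])
  let ?ra = "rep s E psi a" and ?rb = "rep s E psi b"
  have A: "atomic_monomial s E psi ?ra" "(a, ?ra) \<in> Cr s E psi" using rep_props[OF at assms(2)] by auto
  have B: "atomic_monomial s E psi ?rb" "(b, ?rb) \<in> Cr s E psi" using rep_props[OF at assms(3)] by auto
  show "a + b \<in> monomials s" using assms by (simp add: monomials_add)
  show "atomic_monomial s E psi (?ra + ?rb)" using A B atomic_add by blast
  have "(b + a, b + ?ra) \<in> Cr s E psi" by (rule Cr_shift[OF A(2) assms(3)])
  moreover have "?ra \<in> monomials s" using A unfolding atomic_monomial_def by simp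
  then have "(?ra + b, ?ra + ?rb) \<in> Cr s E psi" by (rule Cr_shift[OF B(2)])
  ultimately show "(a + b, ?ra + ?rb) \<in> Cr s E psi"
    by (metis add.commute rtrancl_trans)
qed

lemma polys_add:
  assumes "p \<in> polys s" "q \<in> polys s" shows "p + q \<in> polys s"
  unfolding polys_def
proof (rule CollectI, rule ballI)
  fix m assume "m \<in> Poly_Mapping.keys (p + q)"
  then have "m \<in> Poly_Mapping.keys p \<union> Poly_Mapping.keys q" using keys_add[of p q] by (rule subsetD[rotated])
  then show "Poly_Mapping.keys m \<subseteq> {..<s}" using assms unfolding polys_def by blast
qed

lemma polys_mult:
  assumes pq: "p \<in> polys s" "q \<in> polys s" shows "p * q \<in> polys s"
  unfolding polys_def
proof (rule CollectI, rule ballI)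
  fix m assume "m \<in> Poly_Mapping.keys (p * q)"
  then have "m \<in> {a + b |a b. a \<in> Poly_Mapping.keys p \<and> b \<in> Poly_Mapping.keys q}"
    using keys_mult[of p q] by (rule subsetD[rotated])
  then obtain a b where ab: "m = a + b" "a \<in> Poly_Mapping.keys p" "b \<in> Poly_Mapping.keys q" by blast
  have "Poly_Mapping.keys a \<subseteq> {..<s}" "Poly_Mapping.keys b \<subseteq> {..<s}"
    using pq ab unfolding polys_def by auto
  then show "Poly_Mapping.keys m \<subseteq> {..<s}" using keys_add[of a b] ab(1) by blast
qed

lemma polys_single: "m \<in> monomials s \<Longrightarrow> Poly_Mapping.single m c \<in> polys s"
  unfolding polys_def monomials_def by simp

lemma polys_keys: "p \<in> polys s \<Longrightarrow> Poly_Mapping.keys p \<subseteq> monomials s"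
  unfolding polys_def monomials_def by blast

lemma polys_uminus: "p \<in> polys s \<Longrightarrow> - p \<in> polys s"
  unfolding polys_def by simp

lemma polys_diff: "p \<in> polys s \<Longrightarrow> q \<in> polys s \<Longrightarrow> p - q \<in> polys s"
  using polys_add[of p s "- q"] polys_uminus[of q s] by simp

definition Kset :: "nat \<Rightarrow> (nat \<times> nat) set \<Rightarrow> (nat \<Rightarrow> monom) \<Rightarrow> ('k::comm_ring_1) mpoly set" where
  "Kset s E psi = {p \<in> polys s. Phi (rep s E psi) p = 0}"

lemma K_ideal:
  assumes at: "is_atomic s E psi"
  shows "is_ideal_in (polys s) (Kset s E psi :: ('k::comm_ring_1) mpoly set)"
  unfolding is_ideal_in_def
proof (intro conjI ballI)
  show "Kset s E psi \<subseteq> polys s" unfolding Kset_def by blast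
  show "(0::'k mpoly) \<in> Kset s E psi" unfolding Kset_def polys_def by simp
  fix a b :: "'k mpoly" assume a: "a \<in> Kset s E psi"
  { assume "b \<in> Kset s E psi"
    with a show "a + b \<in> Kset s E psi" unfolding Kset_def by (simp add: polys_add Phi_add) }
  { fix r :: "'k mpoly" assume r: "r \<in> polys s"
    have "Phi (rep s E psi) (r * a) = Phi (rep s E psi) r * Phi (rep s E psi) a"
    proof -
      have ka: "Poly_Mapping.keys a \<subseteq> monomials s" using a polys_keys unfolding Kset_def by blast
      show ?thesis by (rule Phi_mult[OF rep_add[OF at] polys_keys[OF r] ka])
    qed
    with a r show "r * a \<in> Kset s E psi" unfolding Kset_def by (simp add: polys_mult) }
qed

lemma gens_in_K:
  assumes crn: "is_crn s n E psi" and at: "is_atomic s E psi"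
  shows "event_system E psi \<subseteq> (Kset s E psi :: ('k::comm_ring_1) mpoly set)"
proof
  fix g :: "'k mpoly" assume "g \<in> event_system E psi"
  then obtain i j where g: "g = mono_poly (psi i) - mono_poly (psi j)" and ij: "(i, j) \<in> E"
    unfolding event_system_def by blast
  have ps: "psi i \<in> monomials s" "psi j \<in> monomials s"
    using crn ij unfolding is_crn_def by auto
  have "(0 + psi i, 0 + psi j) \<in> event_edges s E psi"
    unfolding event_edges_def using ij monomials_zero[of s] by blast
  then have e: "(psi i, psi j) \<in> Cr s E psi" by auto
  have B: "atomic_monomial s E psi (rep s E psi (psi j))" "(psi j, rep s E psi (psi j)) \<in> Cr s E psi"
    using rep_props[OF at ps(2)] by auto
  have "rep s E psi (psi i) = rep s E psi (psi j)"
    by (rule rep_eq[OF at ps(1) B(1)]) (use e B(2) in \<open>rule rtrancl_trans\<close>)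
  then show "g \<in> Kset s E psi"
    unfolding Kset_def g mono_poly_def using ps
    by (simp add: Phi_minus polys_diff polys_single)
qed

lemma K_sub:
  assumes crn: "is_crn s n E psi" and at: "is_atomic s E psi"
    and I: "is_ideal_in (polys s) I" and SI: "event_system E psi \<subseteq> I"
  shows "Kset s E psi \<subseteq> (I :: ('k::comm_ring_1) mpoly set)"
proof
  have I0: "0 \<in> I" and Iadd: "\<And>a b. a \<in> I \<Longrightarrow> b \<in> I \<Longrightarrow> a + b \<in> I"
    and Imul: "\<And>r a. r \<in> polys s \<Longrightarrow> a \<in> I \<Longrightarrow> r * a \<in> I"
    using I unfolding is_ideal_in_def by auto
  have m1: "(-1 :: 'k mpoly) \<in> polys s"
    using polys_uminus[OF polys_single[where m=0 and s=s and c="1::'k", OF monomials_zero]] by simp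
  have edge: "Poly_Mapping.single a 1 - Poly_Mapping.single b 1 \<in> I"
    if "(a, b) \<in> event_edges s E psi" for a b
  proof -
    from that obtain N i j where ab: "a = N + psi i" "b = N + psi j" "N \<in> monomials s" "(i, j) \<in> E"
      unfolding event_edges_def by blast
    have "mono_poly (psi i) - mono_poly (psi j) \<in> I" using SI ab(4) unfolding event_system_def by blast
    from Imul[OF polys_single[OF ab(3), of 1] this]
    show ?thesis by (simp add: ab mono_poly_def right_diff_distrib mult_single)
  qed
  have chain: "Poly_Mapping.single a 1 - Poly_Mapping.single b 1 \<in> I"
    if "(a, b) \<in> Cr s E psi" for a b
    using that
  proof (induction rule: rtrancl_induct)
    case base then show ?case using I0 by simp
  next
    case (step y z)
    have "Poly_Mapping.single y 1 - Poly_Mapping.single z 1 \<in> I"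
    proof (cases "(y, z) \<in> event_edges s E psi")
      case True then show ?thesis by (rule edge)
    next
      case False
      with step(2) have "(z, y) \<in> event_edges s E psi" by blast
      from Imul[OF m1 edge[OF this]] show ?thesis by simp
    qed
    from Iadd[OF step(3) this] show ?case by simp
  qed
  have mon: "Poly_Mapping.single m c - Poly_Mapping.single (rep s E psi m) c \<in> I"
    if "m \<in> monomials s" for m c
  proof -
    have "(m, rep s E psi m) \<in> Cr s E psi" using rep_props[OF at that] by simp
    from Imul[OF polys_single[where m=0 and s=s and c=c, OF monomials_zero] chain[OF this]]
    show ?thesis by (simp add: right_diff_distrib mult_single)
  qed
  fix p :: "'k mpoly" assume "p \<in> Kset s E psi"
  then have pp: "p \<in> polys s" and ph: "Phi (rep s E psi) p = 0" unfolding Kset_def by auto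
  have sumI: "(\<Sum>m\<in>A. Poly_Mapping.single m (Poly_Mapping.lookup p m)
       - Poly_Mapping.single (rep s E psi m) (Poly_Mapping.lookup p m)) \<in> I"
    if "finite A" "A \<subseteq> monomials s" for A
    using that by (induction A rule: finite_induct) (auto intro: I0 Iadd mon)
  have "p = p - Phi (rep s E psi) p" using ph by simp
  also have "\<dots> = (\<Sum>m\<in>Poly_Mapping.keys p. Poly_Mapping.single m (Poly_Mapping.lookup p m)
       - Poly_Mapping.single (rep s E psi m) (Poly_Mapping.lookup p m))"
    by (subst (1) expansion[of p]) (simp add: Phi_def sum_subtractf)
  finally show "p \<in> I" using sumI[OF finite_keys polys_keys[OF pp]] by simp
qed

theorem lemma5p4:
  fixes s n :: nat and E :: "(nat \<times> nat) set" and psi :: "nat \<Rightarrow> monom"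
  assumes "is_crn s n E psi"
    and "weakly_reversible n E"
    and "is_atomic s E psi"
  shows "prime_ideal_in (polys s :: ('k::field_char_0) mpoly set)
           (ideal_gen_in (polys s) (event_system E psi))"
proof -
  let ?K = "Kset s E psi :: 'k mpoly set"
  let ?r = "rep s E psi"
  have Kid: "is_ideal_in (polys s) ?K" by (rule K_ideal[OF assms(3)])
  have eq: "ideal_gen_in (polys s) (event_system E psi) = ?K"
  proof
    show "ideal_gen_in (polys s) (event_system E psi) \<subseteq> ?K"
      unfolding ideal_gen_in_def
      by (rule Inter_lower) (use Kid gens_in_K[OF assms(1,3)] in blast)
    show "?K \<subseteq> ideal_gen_in (polys s) (event_system E psi)"
      unfolding ideal_gen_in_def
      by (rule Inter_greatest) (use K_sub[OF assms(1,3)] in blast)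
  qed
  have one: "(1 :: 'k mpoly) \<in> polys s"
    using polys_single[where m=0 and s=s and c="1::'k", OF monomials_zero] by simp
  have "Poly_Mapping.single (?r 0) (1::'k) \<noteq> 0"
    by (metis lookup_single_eq lookup_zero one_neq_zero)
  then have "Phi ?r (1 :: 'k mpoly) \<noteq> 0"
    using Phi_single[of ?r 0 "1::'k"] by simp
  then have ne: "?K \<noteq> polys s" using one unfolding Kset_def by blast
  have pr: "a \<in> ?K \<or> b \<in> ?K" if ab: "a \<in> polys s" "b \<in> polys s" "a * b \<in> ?K" for a b
  proof -
    have "Phi ?r (a * b) = Phi ?r a * Phi ?r b"
      by (rule Phi_mult[OF rep_add[OF assms(3)] polys_keys[OF ab(1)] polys_keys[OF ab(2)]])
    with ab(3) have "Phi ?r a * Phi ?r b = 0" unfolding Kset_def by simp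
    then show ?thesis using ab unfolding Kset_def by auto
  qed
  show ?thesis unfolding eq prime_ideal_in_def using Kid ne pr by blast
qed

end
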